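(* Under standing assumptions (A1)–(A4), define for each $\theta$ \[ x^*(\theta)=\arg\max_{x\in[\underline{x},\overline{x}]}\Big\{v(x)+x\Big(\theta-\frac{1-F(\theta)}{f(\theta)}\Big)\Big\},\qquad p(\theta)=u(x^*(\theta),\theta)-\int_{\underline{\theta}}^{\theta}x^a(x^*(z),z)\,dz. \] Then the mechanism that gives each type $\theta$ the allocation $x^*(\theta)$ with probability one at payment $p(\theta)$ is a revenue-maximizing incentive compatible and individually rational mechanism. Under it each type $\theta$ consumes $x^a(x^*(\theta),\theta)=\min\{x^e(\theta),x^*(\theta)\}$. The seller's optimal payoff (its expected revenue) is denoted $\pi(F)$.
   Context: Fix $\underline{\theta}<\overline{\theta}$ and $0<\underline{x}<\overline{x}$. The buyer's private type $\theta\in[\underline{\theta},\overline{\theta}]$ has CDF $F$ and density $f$. Let $v:[0,\overline{x}]\to\mathbb{R}$ be strictly concave and continuously differentiable with $v(0)=0$ (A1). For $x\in[\underline{x},\overline{x}]$, $u(x,\theta)=\max_{0\le x'\le x}[v(x')+\theta x']$ and $x^a(x,\theta)$ is the maximizer over $[0,x]$; $x^e(\theta)$ is the unique maximizer of $v(x')+\theta x'$ over $[0,\overline{x}]$, so $x^a(x,\theta)=\min\{x,x^e(\theta)\}$. Standing assumptions: (A2) $0<m\le f\le M$ for constants $m,M$, and $\theta-\frac{1-F(\theta)}{f(\theta)}$ strictly increasing; (A3) $0<x^e(\underline{\theta})\le\underline{x}$; (A4) $v(x^e(\theta))+\big(\theta-\frac{1-F(\theta)}{f(\theta)}\big)x^e(\theta)\ge0$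 for all $\theta$. A mechanism assigns to each type $\theta$ (measurably) a probability $q(\theta)\in[0,1]$ of trade, a probability distribution over allocations $x(\theta)\in[\underline{x},\overline{x}]$, and a payment $p(\theta)\in\mathbb{R}$. It is incentive compatible (IC) if $q(\theta)\mathbb{E}[u(x(\theta),\theta)]-p(\theta)\ge q(\theta')\mathbb{E}[u(x(\theta'),\theta)]-p(\theta')$ for all $\theta,\theta'$, and individually rational (IR) if $q(\theta)\mathbb{E}[u(x(\theta),\theta)]-p(\theta)\ge0$ for all $\theta$. The seller maximizes $\int_{\underline{\theta}}^{\overline{\theta}}p(\theta)f(\theta)\,d\theta$ over IC and IR mechanisms. *)

theory Defs
  imports "HOL-Probability.Probability"
begin

definition strictly_concave_on :: "real set \<Rightarrow> (real \<Rightarrow> real) \<Rightarrow> bool" where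
  "strictly_concave_on S g \<longleftrightarrow> convex S \<and>
     (\<forall>x\<in>S. \<forall>y\<in>S. \<forall>t. x \<noteq> y \<and> 0 < t \<and> t < 1 \<longrightarrow>
        g ((1 - t) * x + t * y) > (1 - t) * g x + t * g y)"

definition util :: "(real \<Rightarrow> real) \<Rightarrow> real \<Rightarrow> real \<Rightarrow> real" where
  "util v x \<theta> = (SUP x'\<in>{0..x}. v x' + \<theta> * x')"

definition xa :: "(real \<Rightarrow> real) \<Rightarrow> real \<Rightarrow> real \<Rightarrow> real" where
  "xa v x \<theta> = (THE x'. x' \<in> {0..x} \<and> (\<forall>y\<in>{0..x}. v y + \<theta> * y \<le> v x' + \<theta> * x'))"

definition xe :: "(real \<Rightarrow> real) \<Rightarrow> real \<Rightarrow> real \<Rightarrow> real" where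
  "xe v xhi \<theta> = xa v xhi \<theta>"

definition virt :: "(real \<Rightarrow> real) \<Rightarrow> (real \<Rightarrow> real) \<Rightarrow> real \<Rightarrow> real" where
  "virt F f \<theta> = \<theta> - (1 - F \<theta>) / f \<theta>"

definition xstar :: "(real \<Rightarrow> real) \<Rightarrow> (real \<Rightarrow> real) \<Rightarrow> (real \<Rightarrow> real) \<Rightarrow> real \<Rightarrow> real \<Rightarrow> real \<Rightarrow> real" where
  "xstar v F f xlo xhi \<theta> = (THE x. x \<in> {xlo..xhi} \<and>
      (\<forall>y\<in>{xlo..xhi}. v y + y * virt F f \<theta> \<le> v x + x * virt F f \<theta>))"

definition pstar :: "(real \<Rightarrow> real) \<Rightarrow> (real \<Rightarrow> real) \<Rightarrow> (real \<Rightarrow> real) \<Rightarrow> real \<Rightarrow> real \<Rightarrow> real \<Rightarrow> real \<Rightarrow> real" where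
  "pstar v F f xlo xhi tlo \<theta> = util v (xstar v F f xlo xhi \<theta>) \<theta>
      - integral {tlo..\<theta>} (\<lambda>z. xa v (xstar v F f xlo xhi z) z)"

definition lottery :: "real \<Rightarrow> real \<Rightarrow> real measure \<Rightarrow> bool" where
  "lottery xlo xhi L \<longleftrightarrow> prob_space L \<and> sets L = sets borel \<and> (AE x in L. x \<in> {xlo..xhi})"

definition exp_util :: "(real \<Rightarrow> real) \<Rightarrow> real measure \<Rightarrow> real \<Rightarrow> real" where
  "exp_util v L \<theta> = (\<integral>x. util v x \<theta> \<partial>L)"

definition mechanism :: "real \<Rightarrow> real \<Rightarrow> real \<Rightarrow> real \<Rightarrow> (real \<Rightarrow> real) \<Rightarrow> (real \<Rightarrow> real measure)
    \<Rightarrow> (real \<Rightarrow> real) \<Rightarrow> bool" where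
  "mechanism tlo thi xlo xhi q X p \<longleftrightarrow>
     (\<forall>\<theta>\<in>{tlo..thi}. q \<theta> \<in> {0..1} \<and> lottery xlo xhi (X \<theta>)) \<and>
     q \<in> borel_measurable (lebesgue_on {tlo..thi}) \<and>
     p \<in> borel_measurable (lebesgue_on {tlo..thi})"

definition IC :: "(real \<Rightarrow> real) \<Rightarrow> real \<Rightarrow> real \<Rightarrow> (real \<Rightarrow> real) \<Rightarrow> (real \<Rightarrow> real measure)
    \<Rightarrow> (real \<Rightarrow> real) \<Rightarrow> bool" where
  "IC v tlo thi q X p \<longleftrightarrow> (\<forall>\<theta>\<in>{tlo..thi}. \<forall>\<theta>'\<in>{tlo..thi}.
      q \<theta> * exp_util v (X \<theta>) \<theta> - p \<theta> \<ge> q \<theta>' * exp_util v (X \<theta>') \<theta> - p \<theta>')"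

definition IR :: "(real \<Rightarrow> real) \<Rightarrow> real \<Rightarrow> real \<Rightarrow> (real \<Rightarrow> real) \<Rightarrow> (real \<Rightarrow> real measure)
    \<Rightarrow> (real \<Rightarrow> real) \<Rightarrow> bool" where
  "IR v tlo thi q X p \<longleftrightarrow> (\<forall>\<theta>\<in>{tlo..thi}. q \<theta> * exp_util v (X \<theta>) \<theta> - p \<theta> \<ge> 0)"

definition revenue :: "(real \<Rightarrow> real) \<Rightarrow> real \<Rightarrow> real \<Rightarrow> (real \<Rightarrow> real) \<Rightarrow> real" where
  "revenue f tlo thi p = integral {tlo..thi} (\<lambda>\<theta>. p \<theta> * f \<theta>)"

end

theory Submission
  imports Defs
begin

lemmas hk_combine = Henstock_Kurzweil_Integration.integral_combine

lemma K_const: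
  fixes K h :: "real \<Rightarrow> real" and a b C :: real
  assumes ab: "a \<le> b"
    and H: "\<And>s t. a \<le> s \<Longrightarrow> s \<le> t \<Longrightarrow> t \<le> b \<Longrightarrow>
              \<bar>K t - K s\<bar> \<le> (h t - h s) * (t - s) + C * (t - s)^2"
  shows "K b = K a"
proof -
  define D where "D = (h b - h a) * (b - a) + C * (b - a)^2"
  have main: "\<bar>K b - K a\<bar> \<le> D / real n" if n: "n > 0" for n :: nat
  proof -
    define d where "d = (b - a) / real n"
    have d0: "0 \<le> d" using ab n by (simp add: d_def)
    have nd: "real n * d = b - a" using n by (simp add: d_def)
    have ind: "k \<le> n \<Longrightarrow> \<bar>K (a + real k * d) - K a\<bar> \<le> (h (a + real k * d) - h a) * d + C * real k * d^2" for k
    proof (induction k)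
      case 0 then show ?case by simp
    next
      case (Suc k)
      let ?s = "a + real k * d" and ?t = "a + real (Suc k) * d"
      have kn: "real (Suc k) * d \<le> real n * d" using Suc.prems d0 by (intro mult_right_mono) auto
      have s1: "a \<le> ?s" using d0 by simp
      have s2: "?s \<le> ?t" using d0 by (simp add: algebra_simps)
      have s3: "?t \<le> b" using kn nd by simp
      have td: "?t - ?s = d" by (simp add: algebra_simps)
      have "\<bar>K ?t - K ?s\<bar> \<le> (h ?t - h ?s) * d + C * d^2" using H[OF s1 s2 s3] td by simp
      moreover have "\<bar>K ?s - K a\<bar> \<le> (h ?s - h a) * d + C * real k * d^2" using Suc by simp
      ultimately have "\<bar>K ?t - K a\<bar> \<le> (h ?t - h ?s) * d + C * d^2 + ((h ?s - h a) * d + C * real k * d^2)"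
        by linarith
      also have "\<dots> = (h ?t - h a) * d + C * real (Suc k) * d^2" by (simp add: algebra_simps)
      finally show ?case .
    qed
    have "\<bar>K (a + real n * d) - K a\<bar> \<le> (h (a + real n * d) - h a) * d + C * real n * d^2"
      using ind by simp
    also have "a + real n * d = b" using nd by simp
    also have "(h b - h a) * d + C * real n * d^2 = D / real n"
      using n by (simp add: D_def d_def power2_eq_square field_simps)
    finally show ?thesis .
  qed
  show ?thesis
  proof (rule ccontr)
    assume "K b \<noteq> K a"
    then have pos: "\<bar>K b - K a\<bar> > 0" by simp
    obtain n :: nat where n: "n > D / \<bar>K b - K a\<bar>" using reals_Archimedean2 by blast
    have n0: "n > 0"
    proof (rule ccontr)
      assume "\<not> n > 0"
      then have "n = 0" by simp
      then have "D < 0" using n pos by (simp add: divide_less_0_iff)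
      moreover have "\<bar>K b - K a\<bar> \<le> D / real 1" using main[of 1] by simp
      ultimately show False by simp
    qed
    have "D < real n * \<bar>K b - K a\<bar>" using n pos by (simp add: pos_divide_less_eq)
    moreover have "\<bar>K b - K a\<bar> * real n \<le> D" using main[OF n0] n0 by (simp add: pos_le_divide_eq)
    ultimately show False by (simp add: mult.commute)
  qed
qed

lemma integral_between_mono:
  fixes g :: "real \<Rightarrow> real"
  assumes "mono_on {s..t} g" "s \<le> t"
  shows "g s * (t - s) \<le> integral {s..t} g" "integral {s..t} g \<le> g t * (t - s)"
proof -
  have gi: "g integrable_on {s..t}" using assms(1) by (rule integrable_on_mono_on)
  have "integral {s..t} (\<lambda>_. g s) \<le> integral {s..t} g"
    using assms by (intro integral_le[OF _ gi]) (auto simp: mono_on_def)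
  then show "g s * (t - s) \<le> integral {s..t} g" using assms(2) by (simp add: mult.commute)
  have "integral {s..t} g \<le> integral {s..t} (\<lambda>_. g t)"
    using assms by (intro integral_le[OF gi]) (auto simp: mono_on_def)
  then show "integral {s..t} g \<le> g t * (t - s)" using assms(2) by (simp add: mult.commute)
qed

lemma sandwich:
  fixes W g :: "real \<Rightarrow> real"
  assumes S: "\<And>s t. a \<le> s \<Longrightarrow> s \<le> t \<Longrightarrow> t \<le> b \<Longrightarrow>
                g s * (t - s) \<le> W t - W s \<and> W t - W s \<le> g t * (t - s)"
  shows sandwich_mono: "mono_on {a..b} g"
    and sandwich_int: "\<And>s t. a \<le> s \<Longrightarrow> s \<le> t \<Longrightarrow> t \<le> b \<Longrightarrow> W t - W s = integral {s..t} g"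
proof -
  show mono: "mono_on {a..b} g"
  proof (rule mono_onI)
    fix s t assume st: "s \<in> {a..b}" "t \<in> {a..b}" "s \<le> t"
    show "g s \<le> g t"
    proof (cases "s = t")
      case False
      then have "t - s > 0" using st by simp
      moreover have "g s * (t - s) \<le> g t * (t - s)" using S[of s t] st by auto
      ultimately show ?thesis by simp
    qed simp
  qed
  show "W t - W s = integral {s..t} g" if st: "a \<le> s" "s \<le> t" "t \<le> b" for s t
  proof -
  have mst: "mono_on {s'..t'} g" if "s \<le> s'" "t' \<le> t" for s' t'
    using mono st that by (auto simp: mono_on_def)
  have gi: "g integrable_on {s..t}" using mst[of s t] by (simp add: integrable_on_mono_on)
  define K where "K z = W z - integral {s..z} g" for z
  have "K t = K s"
  proof (rule K_const[where K = K and a = s and b = t and h = g and C = 0])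
    show "s \<le> t" by fact
    fix s' t' assume st': "s \<le> s'" "s' \<le> t'" "t' \<le> t"
    have comb: "integral {s..s'} g + integral {s'..t'} g = integral {s..t'} g"
      using st' by (intro Henstock_Kurzweil_Integration.integral_combine integrable_on_subinterval[OF gi]) auto
    have "K t' - K s' = (W t' - W s') - integral {s'..t'} g"
      unfolding K_def using comb by simp
    moreover have "g s' * (t' - s') \<le> integral {s'..t'} g" "integral {s'..t'} g \<le> g t' * (t' - s')"
      using integral_between_mono[OF mst[of s' t'] st'(2)] st' by auto
    moreover have "g s' * (t' - s') \<le> W t' - W s' \<and> W t' - W s' \<le> g t' * (t' - s')"
      using S[of s' t'] st st' by auto
    ultimately show "\<bar>K t' - K s'\<bar> \<le> (g t' - g s') * (t' - s') + 0 * (t' - s')^2"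
      by (simp add: left_diff_distrib abs_le_iff)
  qed
  then show "W t - W s = integral {s..t} g" by (simp add: K_def)
  qed
qed

lemmas hk_diff = Henstock_Kurzweil_Integration.integral_diff
lemmas hk_mr = Henstock_Kurzweil_Integration.integral_mult_right
lemmas hk_ml = Henstock_Kurzweil_Integration.integral_mult_left

lemma int_abs_bound:
  fixes h :: "real \<Rightarrow> real"
  assumes "s \<le> t" "h integrable_on {s..t}" "\<And>z. z \<in> {s..t} \<Longrightarrow> \<bar>h z\<bar> \<le> B"
  shows "\<bar>integral {s..t} h\<bar> \<le> B * (t - s)"
proof -
  have hz: "-B \<le> h z \<and> h z \<le> B" if "z \<in> {s..t}" for z
    using assms(3)[OF that] by (auto simp: abs_le_iff)
  have "integral {s..t} h \<le> integral {s..t} (\<lambda>_. B)"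
    using assms hz by (intro integral_le) auto
  moreover have "integral {s..t} (\<lambda>_. - B) \<le> integral {s..t} h"
    using assms hz by (intro integral_le) auto
  ultimately show ?thesis using assms(1) by (simp add: abs_le_iff mult.commute)
qed

lemma parts_identity:
  fixes g f F :: "real \<Rightarrow> real"
  assumes ab: "a \<le> b"
    and gi: "g integrable_on {a..b}" and gb: "\<And>z. z \<in> {a..b} \<Longrightarrow> \<bar>g z\<bar> \<le> Cg"
    and fi: "f integrable_on {a..b}" and fb: "\<And>z. z \<in> {a..b} \<Longrightarrow> \<bar>f z\<bar> \<le> Mf"
    and F: "\<And>z. z \<in> {a..b} \<Longrightarrow> F z = integral {a..z} f"
    and i1: "(\<lambda>\<theta>. integral {a..\<theta>} g * f \<theta>) integrable_on {a..b}"
    and i2: "(\<lambda>z. g z * (F b - F z)) integrable_on {a..b}"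
  shows "integral {a..b} (\<lambda>\<theta>. integral {a..\<theta>} g * f \<theta>) = integral {a..b} (\<lambda>z. g z * (F b - F z))"
proof -
  define G where "G \<theta> = integral {a..\<theta>} g" for \<theta>
  define P where "P z = F b - F z" for z
  have Cg0: "0 \<le> Cg" using gb[of a] ab by (meson abs_ge_zero atLeastAtMost_iff order.trans order_refl)
  have Mf0: "0 \<le> Mf" using fb[of a] ab by (meson abs_ge_zero atLeastAtMost_iff order.trans order_refl)
  define K where "K \<theta> = integral {a..\<theta>} (\<lambda>z. G z * f z) - integral {a..\<theta>} (\<lambda>z. g z * P z) + G \<theta> * P \<theta>" for \<theta>
  have i1': "(\<lambda>z. G z * f z) integrable_on {a..b}" using i1 by (simp add: G_def)
  have i2': "(\<lambda>z. g z * P z) integrable_on {a..b}" using i2 by (simp add: P_def)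
  have "K b = K a"
  proof (rule K_const[where K = K and a = a and b = b and h = "\<lambda>_. 0" and C = "2 * Cg * Mf"])
    show "a \<le> b" by fact
    fix s t assume st: "a \<le> s" "s \<le> t" "t \<le> b"
    have sub: "{s..t} \<subseteq> {a..b}" "{a..s} \<subseteq> {a..b}" "{a..t} \<subseteq> {a..b}" using st by auto
    have c1: "integral {a..s} (\<lambda>z. G z * f z) + integral {s..t} (\<lambda>z. G z * f z) = integral {a..t} (\<lambda>z. G z * f z)"
      using st by (intro hk_combine integrable_on_subinterval[OF i1']) auto
    have c2: "integral {a..s} (\<lambda>z. g z * P z) + integral {s..t} (\<lambda>z. g z * P z) = integral {a..t} (\<lambda>z. g z * P z)"
      using st by (intro hk_combine integrable_on_subinterval[OF i2']) auto
    have c3: "G s + integral {s..t} g = G t"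
      unfolding G_def using st by (intro hk_combine integrable_on_subinterval[OF gi]) auto
    have c4: "F s + integral {s..t} f = F t"
      using st F[of s] F[of t] by (simp, intro hk_combine integrable_on_subinterval[OF fi]) auto
    have fst: "f integrable_on {s..t}" using integrable_on_subinterval[OF fi sub(1)] .
    have gst: "g integrable_on {s..t}" using integrable_on_subinterval[OF gi sub(1)] .
    have Gf: "(\<lambda>z. G z * f z) integrable_on {s..t}" using integrable_on_subinterval[OF i1' sub(1)] .
    have gP: "(\<lambda>z. g z * P z) integrable_on {s..t}" using integrable_on_subinterval[OF i2' sub(1)] .
    have e1: "integral {s..t} (\<lambda>z. G z * f z) - G s * integral {s..t} f = integral {s..t} (\<lambda>z. (G z - G s) * f z)"
    proof -
      have "integral {s..t} (\<lambda>z. (G z - G s) * f z) = integral {s..t} (\<lambda>z. G z * f z - G s * f z)"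
        by (simp add: left_diff_distrib)
      also have "\<dots> = integral {s..t} (\<lambda>z. G z * f z) - integral {s..t} (\<lambda>z. G s * f z)"
        using Gf fst by (intro hk_diff) (auto intro: integrable_on_mult_right)
      finally show ?thesis by (simp add: hk_mr)
    qed
    have e2: "integral {s..t} (\<lambda>z. g z * P z) - P t * integral {s..t} g = integral {s..t} (\<lambda>z. g z * (P z - P t))"
    proof -
      have "integral {s..t} (\<lambda>z. g z * (P z - P t)) = integral {s..t} (\<lambda>z. g z * P z - P t * g z)"
        by (simp add: algebra_simps)
      also have "\<dots> = integral {s..t} (\<lambda>z. g z * P z) - integral {s..t} (\<lambda>z. P t * g z)"
        using gP gst by (intro hk_diff) (auto intro: integrable_on_mult_right)
      finally show ?thesis by (simp add: hk_mr)
    qed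
    have KK: "K t - K s = integral {s..t} (\<lambda>z. (G z - G s) * f z) - integral {s..t} (\<lambda>z. g z * (P z - P t))"
    proof -
      have "K t - K s = (integral {s..t} (\<lambda>z. G z * f z) - G s * integral {s..t} f)
          - (integral {s..t} (\<lambda>z. g z * P z) - P t * integral {s..t} g)"
      proof -
        have pst: "P s = P t + integral {s..t} f" using c4 by (simp add: P_def)
        have "K t - K s = (integral {a..t} (\<lambda>z. G z * f z) - integral {a..s} (\<lambda>z. G z * f z))
           - (integral {a..t} (\<lambda>z. g z * P z) - integral {a..s} (\<lambda>z. g z * P z))
           + (G t * P t - G s * P s)" unfolding K_def by simp
        also have "\<dots> = integral {s..t} (\<lambda>z. G z * f z) - integral {s..t} (\<lambda>z. g z * P z)
           + ((G s + integral {s..t} g) * P t - G s * (P t + integral {s..t} f))"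
          using c1 c2 c3 pst by simp
        finally show ?thesis by (simp add: algebra_simps)
      qed
      then show ?thesis using e1 e2 by simp
    qed
    have b1: "\<bar>integral {s..t} (\<lambda>z. (G z - G s) * f z)\<bar> \<le> (Cg * (t - s) * Mf) * (t - s)"
    proof (rule int_abs_bound[OF st(2)])
      show "(\<lambda>z. (G z - G s) * f z) integrable_on {s..t}"
        using Gf fst by (simp add: left_diff_distrib integrable_diff integrable_on_mult_right)
      fix z assume z: "z \<in> {s..t}"
      have "G s + integral {s..z} g = G z"
        unfolding G_def using st z by (intro hk_combine integrable_on_subinterval[OF gi]) auto
      moreover have "\<bar>integral {s..z} g\<bar> \<le> Cg * (z - s)"
        using z st by (intro int_abs_bound integrable_on_subinterval[OF gi] gb) auto
      ultimately have "\<bar>G z - G s\<bar> \<le> Cg * (t - s)"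
        using z Cg0 by (smt (verit, best) atLeastAtMost_iff mult_left_mono)
      moreover have "\<bar>f z\<bar> \<le> Mf" using z st by (intro fb) auto
      ultimately show "\<bar>(G z - G s) * f z\<bar> \<le> Cg * (t - s) * Mf"
        unfolding abs_mult using Cg0 st by (intro mult_mono) auto
    qed
    have b2: "\<bar>integral {s..t} (\<lambda>z. g z * (P z - P t))\<bar> \<le> (Cg * (Mf * (t - s))) * (t - s)"
    proof (rule int_abs_bound[OF st(2)])
      show "(\<lambda>z. g z * (P z - P t)) integrable_on {s..t}"
        using gP gst by (simp add: right_diff_distrib integrable_diff integrable_on_mult_left)
      fix z assume z: "z \<in> {s..t}"
      have "F z + integral {z..t} f = F t"
        using z st F[of z] F[of t] by (simp, intro hk_combine integrable_on_subinterval[OF fi]) auto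
      moreover have "\<bar>integral {z..t} f\<bar> \<le> Mf * (t - z)"
        using z st by (intro int_abs_bound integrable_on_subinterval[OF fi] fb) auto
      ultimately have "\<bar>P z - P t\<bar> \<le> Mf * (t - s)"
        unfolding P_def using z Mf0 by (smt (verit, best) atLeastAtMost_iff mult_left_mono)
      moreover have "\<bar>g z\<bar> \<le> Cg" using z st by (intro gb) auto
      ultimately show "\<bar>g z * (P z - P t)\<bar> \<le> Cg * (Mf * (t - s))"
        unfolding abs_mult using Cg0 st by (intro mult_mono) auto
    qed
    have "\<bar>K t - K s\<bar> \<le> (Cg * (t - s) * Mf) * (t - s) + (Cg * (Mf * (t - s))) * (t - s)"
      using KK b1 b2 by linarith
    then show "\<bar>K t - K s\<bar> \<le> (0 - 0) * (t - s) + 2 * Cg * Mf * (t - s)^2"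
      by (simp add: power2_eq_square algebra_simps)
  qed
  moreover have "K a = 0" by (simp add: K_def G_def)
  moreover have "K b = integral {a..b} (\<lambda>z. G z * f z) - integral {a..b} (\<lambda>z. g z * P z)"
    by (simp add: K_def P_def)
  ultimately show ?thesis by (simp add: G_def P_def)
qed



lemma sc_apply:
  assumes "strictly_concave_on S g" "x \<in> S" "y \<in> S" "x \<noteq> y" "0 < t" "t < 1"
  shows "g ((1 - t) * x + t * y) > (1 - t) * g x + t * g y"
  using assms unfolding strictly_concave_on_def by blast

lemma argmax_strict:
  fixes v :: "real \<Rightarrow> real"
  assumes conc: "strictly_concave_on {0..xhi} v"
    and lh: "0 \<le> lo" "hi \<le> xhi"
    and y: "y \<in> {lo..hi}" and ymax: "\<forall>z\<in>{lo..hi}. v z + c * z \<le> v y + c * y"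
    and z: "z \<in> {lo..hi}" "z \<noteq> y"
  shows "v z + c * z < v y + c * y"
proof (rule ccontr)
  assume "\<not> ?thesis"
  then have ge: "v y + c * y \<le> v z + c * z" by simp
  define m where "m = (1 - 1/2) * y + (1/2) * z"
  have "v m > (1 - 1/2) * v y + (1/2) * v z"
    unfolding m_def using y z lh by (intro sc_apply[OF conc]) auto
  moreover have "m \<in> {lo..hi}" using y z by (auto simp: m_def)
  ultimately have "v m + c * m > v y + c * y" using ge by (simp add: m_def algebra_simps)
  then show False using ymax \<open>m \<in> {lo..hi}\<close> by force
qed

lemma argmax_ex1:
  fixes v :: "real \<Rightarrow> real"
  assumes conc: "strictly_concave_on {0..xhi} v" and cont: "continuous_on {0..xhi} v"
    and lh: "0 \<le> lo" "lo \<le> hi" "hi \<le> xhi"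
  shows "\<exists>!y. y \<in> {lo..hi} \<and> (\<forall>z\<in>{lo..hi}. v z + c * z \<le> v y + c * y)"
proof -
  have "continuous_on {lo..hi} (\<lambda>z. v z + c * z)"
    using cont lh by (intro continuous_intros) (auto elim: continuous_on_subset)
  then obtain y where "y \<in> {lo..hi}" "\<forall>z\<in>{lo..hi}. v z + c * z \<le> v y + c * y"
    using continuous_attains_sup[of "{lo..hi}" "\<lambda>z. v z + c * z"] lh by auto
  moreover have "y' = y" if "y' \<in> {lo..hi}" "\<forall>z\<in>{lo..hi}. v z + c * z \<le> v y' + c * y'" for y'
  proof (rule ccontr)
    assume ne: "y' \<noteq> y"
    have "v y' + c * y' < v y + c * y"
      using argmax_strict[OF conc lh(1) lh(3) \<open>y \<in> {lo..hi}\<close>] calculation that ne by auto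
    moreover have "v y + c * y \<le> v y' + c * y'" using that calculation \<open>y \<in> {lo..hi}\<close> by auto
    ultimately show False by simp
  qed
  ultimately show ?thesis by blast
qed

lemma xa_props:
  assumes conc: "strictly_concave_on {0..xhi} v" and cont: "continuous_on {0..xhi} v"
    and x: "0 \<le> x" "x \<le> xhi"
  shows "xa v x \<theta> \<in> {0..x}" "\<forall>y\<in>{0..x}. v y + \<theta> * y \<le> v (xa v x \<theta>) + \<theta> * xa v x \<theta>"
  using theI'[OF argmax_ex1[OF conc cont order_refl x, of \<theta>]] unfolding xa_def by auto

lemma xa_eq:
  assumes conc: "strictly_concave_on {0..xhi} v" and cont: "continuous_on {0..xhi} v"
    and x: "0 \<le> x" "x \<le> xhi"
    and y: "y \<in> {0..x}" "\<forall>z\<in>{0..x}. v z + \<theta> * z \<le> v y + \<theta> * y"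
  shows "xa v x \<theta> = y"
  unfolding xa_def using the1_equality[OF argmax_ex1[OF conc cont order_refl x, of \<theta>]] y by auto

lemma util_eq:
  assumes conc: "strictly_concave_on {0..xhi} v" and cont: "continuous_on {0..xhi} v"
    and x: "0 \<le> x" "x \<le> xhi"
  shows "util v x \<theta> = v (xa v x \<theta>) + \<theta> * xa v x \<theta>"
  unfolding util_def using xa_props[OF conc cont x, of \<theta>]
  by (intro cSup_eq_maximum) auto

lemma xstar_props:
  assumes conc: "strictly_concave_on {0..xhi} v" and cont: "continuous_on {0..xhi} v"
    and x: "0 \<le> xlo" "xlo \<le> xhi"
  shows "xstar v F f xlo xhi \<theta> \<in> {xlo..xhi}"
    "\<forall>y\<in>{xlo..xhi}. v y + virt F f \<theta> * y \<le> v (xstar v F f xlo xhi \<theta>) + virt F f \<theta> * xstar v F f xlo xhi \<theta>"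
  using theI'[OF argmax_ex1[OF conc cont x order_refl, of "virt F f \<theta>"]] unfolding xstar_def
  by (auto simp: mult.commute)

lemma xa_min:
  assumes conc: "strictly_concave_on {0..xhi} v" and cont: "continuous_on {0..xhi} v"
    and x: "0 \<le> x" "x \<le> xhi"
  shows "xa v x \<theta> = min x (xe v xhi \<theta>)"
proof -
  define e where "e = xe v xhi \<theta>"
  have e: "e \<in> {0..xhi}" "\<forall>y\<in>{0..xhi}. v y + \<theta> * y \<le> v e + \<theta> * e"
    using xa_props[OF conc cont _ order_refl, of \<theta>] x unfolding e_def xe_def by auto
  show ?thesis
  proof (cases "e \<le> x")
    case True
    then have "xa v x \<theta> = e" using e x by (intro xa_eq[OF conc cont x]) auto
    then show ?thesis using True by (simp add: e_def)
  next
    case False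
    have "xa v x \<theta> = x"
    proof (rule xa_eq[OF conc cont x])
      show "x \<in> {0..x}" using x by simp
      show "\<forall>z\<in>{0..x}. v z + \<theta> * z \<le> v x + \<theta> * x"
      proof
        fix y assume y: "y \<in> {0..x}"
        show "v y + \<theta> * y \<le> v x + \<theta> * x"
        proof (cases "y = x")
          case False
          then have yx: "y < x" using y by simp
          define t where "t = (x - y) / (e - y)"
          have t: "0 < t" "t < 1" using yx False \<open>\<not> e \<le> x\<close> by (auto simp: t_def field_simps)
          have te: "t * (e - y) = x - y" using yx \<open>\<not> e \<le> x\<close> by (simp add: t_def)
          have xt: "x = (1 - t) * y + t * e" using te by (simp add: algebra_simps)
          have A: "v x > (1 - t) * v y + t * v e"
            unfolding xt using y e x t yx \<open>\<not> e \<le> x\<close> by (intro sc_apply[OF conc]) auto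
          have A': "v x > v y - t * v y + t * v e" using A by (simp add: algebra_simps)
          have B: "v y + \<theta> * y \<le> v e + \<theta> * e" using e y x by auto
          have B': "t * v y + t * (\<theta> * y) \<le> t * v e + t * (\<theta> * e)"
            using mult_left_mono[OF B, of t] t by (simp add: algebra_simps)
          have eq: "\<theta> * x = \<theta> * y - t * (\<theta> * y) + t * (\<theta> * e)"
            by (subst xt) (simp add: algebra_simps)
          show ?thesis using A' B' eq by linarith
        qed simp
      qed
    qed
    then show ?thesis using False by (simp add: e_def)
  qed
qed



lemma Sup_unbdd_const:
  fixes X Y :: "real set"
  assumes "\<not> bdd_above X" "\<not> bdd_above Y"
  shows "Sup X = Sup Y"
proof -
  have "(\<lambda>z. \<forall>x\<in>X. x \<le> z) = (\<lambda>z. \<forall>x\<in>Y. x \<le> z)"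
    using assms unfolding bdd_above_def by (intro ext) blast
  then show ?thesis unfolding Sup_real_def by simp
qed

lemma util_meas: "(\<lambda>x. util v x \<theta>) \<in> borel_measurable borel"
proof -
  define g where "g y = v y + \<theta> * y" for y
  define B where "B = {x. 0 \<le> x \<and> bdd_above (g ` {0..x})}"
  have u: "util v x \<theta> = Sup (g ` {0..x})" for x unfolding util_def g_def by simp
  have iB: "is_interval B" unfolding is_interval_1
  proof (intro ballI allI impI)
    fix a b x assume ab: "a \<in> B" "b \<in> B" "a \<le> x \<and> x \<le> b"
    have sub: "g ` {0..x} \<subseteq> g ` {0..b}" using ab by (intro image_mono) auto
    have bb: "bdd_above (g ` {0..b})" using ab(2) by (simp add: B_def)
    have "0 \<le> x" using ab(1,3) by (simp add: B_def)
    then show "x \<in> B" using bdd_above_mono[OF bb sub] by (simp add: B_def)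
  qed
  have iB2: "is_interval ({0..} - B)" unfolding is_interval_1
  proof (intro ballI allI impI)
    fix a b x assume ab: "a \<in> {0..} - B" "b \<in> {0..} - B" "a \<le> x \<and> x \<le> b"
    have sub: "g ` {0..a} \<subseteq> g ` {0..x}" using ab by (intro image_mono) auto
    have a0: "0 \<le> a" "\<not> bdd_above (g ` {0..a})" using ab(1) by (auto simp: B_def)
    have "\<not> bdd_above (g ` {0..x})"
    proof
      assume "bdd_above (g ` {0..x})"
      then have "bdd_above (g ` {0..a})" by (rule bdd_above_mono[OF _ sub])
      then show False using a0(2) by simp
    qed
    then show "x \<in> {0..} - B" using a0(1) ab(3) by (simp add: B_def)
  qed
  show ?thesis
  proof (rule borel_measurable_piecewise_mono[of "{{..<0}, B, {0..} - B}"])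
    show "countable {{..<0}, B, {0..} - B}" by simp
    show "c \<in> sets borel" if "c \<in> {{..<0}, B, {0..} - B}" for c :: "real set"
      using that iB iB2 by (auto intro: real_interval_borel_measurable)
    show "\<Union>{{..<0}, B, {0..} - B} = (UNIV :: real set)" by (auto simp: B_def)
    show "mono_on c (\<lambda>x. util v x \<theta>)" if "c \<in> {{..<0}, B, {0..} - B}" for c
    proof -
      have "mono_on {..<0} (\<lambda>x. util v x \<theta>)"
      proof (rule mono_onI)
        fix x y :: real assume "x \<in> {..<0}" "y \<in> {..<0}" "x \<le> y"
        then have "{0..x} = {}" "{0..y} = {}" by auto
        then show "util v x \<theta> \<le> util v y \<theta>" unfolding u by simp
      qed
      moreover have "mono_on B (\<lambda>x. util v x \<theta>)"
      proof (rule mono_onI)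
        fix x y :: real assume xy: "x \<in> B" "y \<in> B" "x \<le> y"
        have "Sup (g ` {0..x}) \<le> Sup (g ` {0..y})"
        proof (rule cSup_subset_mono)
          show "g ` {0..x} \<noteq> {}" using xy(1) by (simp add: B_def)
          show "bdd_above (g ` {0..y})" using xy(2) by (simp add: B_def)
          show "g ` {0..x} \<subseteq> g ` {0..y}" using xy(3) by (intro image_mono) simp
        qed
        then show "util v x \<theta> \<le> util v y \<theta>" unfolding u .
      qed
      moreover have "mono_on ({0..} - B) (\<lambda>x. util v x \<theta>)"
      proof (rule mono_onI)
        fix x y :: real assume xy: "x \<in> {0..} - B" "y \<in> {0..} - B" "x \<le> y"
        then have "\<not> bdd_above (g ` {0..x})" "\<not> bdd_above (g ` {0..y})" by (auto simp: B_def)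
        then have "Sup (g ` {0..x}) = Sup (g ` {0..y})" by (rule Sup_unbdd_const)
        then show "util v x \<theta> \<le> util v y \<theta>" unfolding u by simp
      qed
      ultimately show ?thesis using that by auto
    qed
  qed
qed

lemma util_mono:
  assumes conc: "strictly_concave_on {0..xhi} v" and cont: "continuous_on {0..xhi} v"
    and x: "0 \<le> x" "x \<le> x'" "x' \<le> xhi" and th: "\<theta> \<le> \<theta>'"
  shows "util v x \<theta> \<le> util v x' \<theta>'"
proof -
  have x': "0 \<le> x'" using x by simp
  have a1: "xa v x \<theta> \<in> {0..x}" using xa_props(1)[OF conc cont x(1) order_trans[OF x(2,3)]] .
  have a2: "xa v x' \<theta> \<in> {0..x'}" "\<forall>y\<in>{0..x'}. v y + \<theta> * y \<le> v (xa v x' \<theta>) + \<theta> * xa v x' \<theta>"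
    using xa_props[OF conc cont x' x(3)] by auto
  have a3: "\<forall>y\<in>{0..x'}. v y + \<theta>' * y \<le> v (xa v x' \<theta>') + \<theta>' * xa v x' \<theta>'"
    using xa_props[OF conc cont x' x(3)] by auto
  have "util v x \<theta> = v (xa v x \<theta>) + \<theta> * xa v x \<theta>"
    using util_eq[OF conc cont x(1) order_trans[OF x(2,3)]] .
  also have "\<dots> \<le> v (xa v x' \<theta>) + \<theta> * xa v x' \<theta>" using a1 a2 x by auto
  also have "\<dots> \<le> v (xa v x' \<theta>) + \<theta>' * xa v x' \<theta>" using a2 th by (auto intro: mult_right_mono)
  also have "\<dots> \<le> v (xa v x' \<theta>') + \<theta>' * xa v x' \<theta>'" using a2 a3 by auto
  also have "\<dots> = util v x' \<theta>'" using util_eq[OF conc cont x' x(3)] by simp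
  finally show ?thesis .
qed

lemma util_sandwich:
  assumes conc: "strictly_concave_on {0..xhi} v" and cont: "continuous_on {0..xhi} v"
    and x: "0 \<le> x" "x \<le> xhi"
  shows "util v x t - util v x s \<ge> (t - s) * xa v x s"
proof -
  have "v (xa v x s) + t * xa v x s \<le> v (xa v x t) + t * xa v x t"
    using xa_props[OF conc cont x, of s] xa_props[OF conc cont x, of t] by auto
  moreover have "(t - s) * xa v x s = t * xa v x s - s * xa v x s" by (simp add: left_diff_distrib)
  ultimately show ?thesis using util_eq[OF conc cont x, of s] util_eq[OF conc cont x, of t]
    by linarith
qed

lemma meas_mono:
  fixes f :: "real \<Rightarrow> real"
  assumes "mono_on {a..b} f"
  shows "f \<in> borel_measurable (lebesgue_on {a..b})"
  using integrable_mono_on[OF assms] by (rule borel_measurable_integrable)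

lemma meas_cont:
  fixes f :: "real \<Rightarrow> real"
  assumes "continuous_on {a..b} f"
  shows "f \<in> borel_measurable (lebesgue_on {a..b})"
  using assms by (intro continuous_imp_measurable_on_sets_lebesgue) auto

lemma prod_int:
  fixes h g :: "real \<Rightarrow> real"
  assumes "h \<in> borel_measurable (lebesgue_on {a..b})" "\<And>x. x \<in> {a..b} \<Longrightarrow> \<bar>h x\<bar> \<le> B"
    "g absolutely_integrable_on {a..b}"
  shows "(\<lambda>x. h x * g x) integrable_on {a..b}"
proof -
  have bnd: "bounded (h ` {a..b})" unfolding bounded_iff
    by (rule exI[of _ B]) (use assms(2) in auto)
  have "(\<lambda>x. h x * g x) absolutely_integrable_on {a..b}"
    by (rule absolutely_integrable_bounded_measurable_product_real[OF assms(1) _ bnd assms(3)]) simp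
  then show ?thesis by (rule set_lebesgue_integral_eq_integral(1))
qed

lemma lot_int:
  fixes h :: "real \<Rightarrow> real"
  assumes L: "lottery xlo xhi L" and h: "h \<in> borel_measurable borel"
    and B: "\<forall>y\<in>{xlo..xhi}. \<bar>h y\<bar> \<le> B"
  shows "integrable L h"
proof -
  have P: "prob_space L" and sL: "sets L = sets borel" and ae: "AE y in L. y \<in> {xlo..xhi}"
    using L unfolding lottery_def by auto
  have hm: "h \<in> borel_measurable L" using h by (subst measurable_cong_sets[OF sL refl])
  show ?thesis
  proof (rule finite_measure.integrable_const_bound[OF prob_space.finite_measure[OF P], of h B])
    show "AE x in L. norm (h x) \<le> B" using ae
    proof eventually_elim
      case (elim y) then show ?case using B by auto
    qed
  qed (rule hm)
qed

lemma lot_le: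
  fixes h :: "real \<Rightarrow> real"
  assumes L: "lottery xlo xhi L" and h: "integrable L h"
    and B: "\<forall>y\<in>{xlo..xhi}. h y \<le> c"
  shows "integral\<^sup>L L h \<le> c"
proof -
  have P: "prob_space L" and ae: "AE y in L. y \<in> {xlo..xhi}"
    using L unfolding lottery_def by auto
  have "AE y in L. h y \<le> c" using ae
  proof eventually_elim
    case (elim y) then show ?case using B by auto
  qed
  then show ?thesis using prob_space.integral_le_const[OF P h] by simp
qed

lemma lot_ge:
  fixes h :: "real \<Rightarrow> real"
  assumes L: "lottery xlo xhi L" and h: "integrable L h"
    and B: "\<forall>y\<in>{xlo..xhi}. c \<le> h y"
  shows "c \<le> integral\<^sup>L L h"
proof -
  have P: "prob_space L" and ae: "AE y in L. y \<in> {xlo..xhi}"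
    using L unfolding lottery_def by auto
  have "AE y in L. c \<le> h y" using ae
  proof eventually_elim
    case (elim y) then show ?case using B by auto
  qed
  then show ?thesis using prob_space.integral_ge_const[OF P h] by simp
qed



theorem proposition1:
  fixes tlo thi xlo xhi m M :: real
    and v v' F f :: "real \<Rightarrow> real"
  assumes types: "tlo < thi"
    and allocs: "0 < xlo" "xlo < xhi"
    (* (A1) *)
    and A1_conc: "strictly_concave_on {0..xhi} v"
    and A1_deriv: "\<forall>x\<in>{0..xhi}. (v has_real_derivative v' x) (at x within {0..xhi})"
    and A1_C1: "continuous_on {0..xhi} v'"
    and A1_zero: "v 0 = 0"
    (* F is the CDF with density f on [tlo,thi] *)
    and dens_int: "f integrable_on {tlo..thi}"
    and cdf: "\<forall>\<theta>\<in>{tlo..thi}. F \<theta> = integral {tlo..\<theta>} f"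
    and cdf_top: "F thi = 1"
    (* (A2) *)
    and A2_bounds: "0 < m" "\<forall>\<theta>\<in>{tlo..thi}. m \<le> f \<theta> \<and> f \<theta> \<le> M"
    and A2_mono: "strict_mono_on {tlo..thi} (virt F f)"
    (* (A3) *)
    and A3: "0 < xe v xhi tlo" "xe v xhi tlo \<le> xlo"
    (* (A4) *)
    and A4: "\<forall>\<theta>\<in>{tlo..thi}. v (xe v xhi \<theta>) + virt F f \<theta> * xe v xhi \<theta> \<ge> 0"
  shows
    "mechanism tlo thi xlo xhi (\<lambda>_. 1) (\<lambda>\<theta>. return borel (xstar v F f xlo xhi \<theta>))
        (pstar v F f xlo xhi tlo)
     \<and> IC v tlo thi (\<lambda>_. 1) (\<lambda>\<theta>. return borel (xstar v F f xlo xhi \<theta>)) (pstar v F f xlo xhi tlo)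
     \<and> IR v tlo thi (\<lambda>_. 1) (\<lambda>\<theta>. return borel (xstar v F f xlo xhi \<theta>)) (pstar v F f xlo xhi tlo)
     \<and> (\<forall>q X p. mechanism tlo thi xlo xhi q X p \<and> IC v tlo thi q X p \<and> IR v tlo thi q X p
          \<longrightarrow> revenue f tlo thi p \<le> revenue f tlo thi (pstar v F f xlo xhi tlo))
     \<and> (\<forall>\<theta>\<in>{tlo..thi}. xa v (xstar v F f xlo xhi \<theta>) \<theta>
          = min (xe v xhi \<theta>) (xstar v F f xlo xhi \<theta>))"
proof -
  define a where "a = tlo"
  define b where "b = thi"
  have ab: "a \<le> b" using types by (simp add: a_def b_def)
  define XS where "XS \<theta> = xstar v F f xlo xhi \<theta>" for \<theta>
  define XE where "XE \<theta> = xe v xhi \<theta>" for \<theta>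
  define k where "k \<theta> = min (XE \<theta>) (XS \<theta>)" for \<theta>
  define vt where "vt \<theta> = virt F f \<theta>" for \<theta>
  have cont: "continuous_on {0..xhi} v"
    using A1_deriv by (auto simp: continuous_on_eq_continuous_within intro: DERIV_continuous)
  have xhi0: "0 \<le> xhi" using allocs by simp
  have XE: "XE \<theta> \<in> {0..xhi}" "\<forall>y\<in>{0..xhi}. v y + \<theta> * y \<le> v (XE \<theta>) + \<theta> * XE \<theta>" for \<theta>
    using xa_props[OF A1_conc cont xhi0 order_refl] by (auto simp: XE_def xe_def)
  have XS: "XS \<theta> \<in> {xlo..xhi}" "\<forall>y\<in>{xlo..xhi}. v y + vt \<theta> * y \<le> v (XS \<theta>) + vt \<theta> * XS \<theta>" for \<theta>
    using xstar_props[OF A1_conc cont, of xlo F f \<theta>] allocs by (auto simp: XS_def vt_def)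
  have xa_min': "xa v x \<theta> = min x (XE \<theta>)" if "0 \<le> x" "x \<le> xhi" for x \<theta>
    using xa_min[OF A1_conc cont that] by (simp add: XE_def)
  have util_eq': "util v x \<theta> = v (min x (XE \<theta>)) + \<theta> * min x (XE \<theta>)" if "0 \<le> x" "x \<le> xhi" for x \<theta>
    using util_eq[OF A1_conc cont that] xa_min'[OF that] by simp
  have XS0: "0 \<le> XS \<theta>" "XS \<theta> \<le> xhi" for \<theta> using XS(1)[of \<theta>] allocs by auto
  have k_eq: "xa v (XS \<theta>) \<theta> = k \<theta>" for \<theta>
    using xa_min'[OF XS0] by (simp add: k_def min.commute)
  have U0_eq: "util v (XS \<theta>) \<theta> = v (k \<theta>) + \<theta> * k \<theta>" for \<theta>
    using util_eq'[OF XS0] by (simp add: k_def min.commute)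
  have k_bnd: "0 \<le> k \<theta>" "k \<theta> \<le> xhi" for \<theta>
    using XE(1)[of \<theta>] XS0[of \<theta>] by (auto simp: k_def)
  have fpos: "0 < f \<theta>" if "\<theta> \<in> {a..b}" for \<theta>
    using A2_bounds that by (auto simp: a_def b_def intro: less_le_trans)
  have fbnd: "\<bar>f \<theta>\<bar> \<le> M" if "\<theta> \<in> {a..b}" for \<theta>
    using A2_bounds that fpos[OF that] by (auto simp: a_def b_def)
  have fi: "f integrable_on {a..b}" using dens_int by (simp add: a_def b_def)
  have Fdef: "F \<theta> = integral {a..\<theta>} f" if "\<theta> \<in> {a..b}" for \<theta>
    using cdf that by (simp add: a_def b_def)
  have Fb: "F b = 1" using cdf_top by (simp add: b_def)
  have Fint: "integral {a..b} f = 1" using Fdef[of b] Fb ab by simp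
  have F_le1: "F \<theta> \<le> 1" if th: "\<theta> \<in> {a..b}" for \<theta>
  proof -
    have "integral {a..\<theta>} f + integral {\<theta>..b} f = integral {a..b} f"
      using th by (intro hk_combine fi) auto
    moreover have "0 \<le> integral {\<theta>..b} f"
      using th fpos by (intro Henstock_Kurzweil_Integration.integral_nonneg integrable_on_subinterval[OF fi])
        (auto intro: less_imp_le)
    ultimately show ?thesis using Fdef[OF th] Fint by simp
  qed
  have vt_le: "vt \<theta> \<le> \<theta>" if th: "\<theta> \<in> {a..b}" for \<theta>
    using F_le1[OF th] fpos[OF th] by (simp add: vt_def virt_def)
  have vt_eq: "vt \<theta> = \<theta> - (1 - F \<theta>) / f \<theta>" for \<theta> by (simp add: vt_def virt_def)
  have XS_le_XE: "XS \<theta> \<le> XE \<theta>" if th: "\<theta> \<in> {a..b}" and lo: "xlo \<le> XE \<theta>" for \<theta>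
  proof (rule ccontr)
    assume "\<not> ?thesis"
    then have gt: "XE \<theta> < XS \<theta>" by simp
    have "v (XE \<theta>) + vt \<theta> * XE \<theta> \<le> v (XS \<theta>) + vt \<theta> * XS \<theta>"
      using XS(2)[of \<theta>] XE(1)[of \<theta>] lo by auto
    moreover have "v (XS \<theta>) + \<theta> * XS \<theta> < v (XE \<theta>) + \<theta> * XE \<theta>"
      using argmax_strict[OF A1_conc order_refl order_refl XE(1) XE(2)] XS0[of \<theta>] gt by auto
    moreover have "0 \<le> (\<theta> - vt \<theta>) * (XS \<theta> - XE \<theta>)"
      using vt_le[OF th] gt by simp
    ultimately show False by (simp add: algebra_simps)
  qed
  have phik_nonneg: "0 \<le> v (k \<theta>) + vt \<theta> * k \<theta>" if th: "\<theta> \<in> {a..b}" for \<theta>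
  proof (cases "XE \<theta> \<le> XS \<theta>")
    case True
    then show ?thesis using A4 th by (simp add: k_def XE_def vt_def a_def b_def)
  next
    case False
    then have "k \<theta> = XS \<theta>" by (simp add: k_def)
    moreover have "v (XE \<theta>) + vt \<theta> * XE \<theta> \<le> v (XS \<theta>) + vt \<theta> * XS \<theta>"
      using XS(2)[of \<theta>] XE(1)[of \<theta>] XS(1)[of \<theta>] False by auto
    moreover have "0 \<le> v (XE \<theta>) + vt \<theta> * XE \<theta>"
      using A4 th by (simp add: XE_def vt_def a_def b_def)
    ultimately show ?thesis by simp
  qed
  have phi_le: "v (min y (XE \<theta>)) + vt \<theta> * min y (XE \<theta>) \<le> v (k \<theta>) + vt \<theta> * k \<theta>"
    if th: "\<theta> \<in> {a..b}" and y: "y \<in> {xlo..xhi}" for \<theta> y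
  proof (cases "XE \<theta> \<le> xlo")
    case True
    then have "min y (XE \<theta>) = XE \<theta>" "k \<theta> = XE \<theta>" using y XS(1)[of \<theta>] by (auto simp: k_def)
    then show ?thesis by simp
  next
    case False
    then have "k \<theta> = XS \<theta>" using XS_le_XE[OF th] by (simp add: k_def)
    moreover have "min y (XE \<theta>) \<in> {xlo..xhi}" using y False XE(1)[of \<theta>] by auto
    ultimately show ?thesis using XS(2)[of \<theta>] by simp
  qed
  have XS_mono: "mono_on {a..b} XS"
  proof (rule mono_onI)
    fix s t assume st: "s \<in> {a..b}" "t \<in> {a..b}" "s \<le> t"
    show "XS s \<le> XS t"
    proof (cases "s = t")
      case False
      then have "vt s < vt t" using st A2_mono
        by (auto simp: vt_def a_def b_def intro: strict_mono_onD)
      moreover have "v (XS t) + vt s * XS t \<le> v (XS s) + vt s * XS s" using XS(1)[of t] XS(2)[of s] by auto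
      moreover have "v (XS s) + vt t * XS s \<le> v (XS t) + vt t * XS t" using XS(1)[of s] XS(2)[of t] by auto
      ultimately have "0 \<le> (vt t - vt s) * (XS t - XS s)" by (simp add: algebra_simps)
      then show ?thesis using \<open>vt s < vt t\<close> by (simp add: zero_le_mult_iff)
    qed simp
  qed
  have XE_mono: "XE s \<le> XE t" if "s \<le> t" for s t
  proof (cases "s = t")
    case False
    then have "s < t" using that by simp
    moreover have "v (XE t) + s * XE t \<le> v (XE s) + s * XE s" using XE(1)[of t] XE(2)[of s] by auto
    moreover have "v (XE s) + t * XE s \<le> v (XE t) + t * XE t" using XE(1)[of s] XE(2)[of t] by auto
    ultimately have "0 \<le> (t - s) * (XE t - XE s)" by (simp add: algebra_simps)
    then show ?thesis using \<open>s < t\<close> by (simp add: zero_le_mult_iff)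
  qed simp
  have k_mono: "mono_on {a..b} k"
    using XS_mono XE_mono unfolding mono_on_def k_def by (meson min.mono)
  have ki: "k integrable_on {a..b}" by (rule integrable_on_mono_on[OF k_mono])
  define K where "K \<theta> = integral {a..\<theta>} k" for \<theta>
  have pstar_eq: "pstar v F f xlo xhi tlo \<theta> = (v (k \<theta>) + \<theta> * k \<theta>) - K \<theta>" for \<theta>
    unfolding pstar_def K_def a_def
    using U0_eq[of \<theta>] k_eq by (simp add: XS_def)
  have pstar_fun: "pstar v F f xlo xhi tlo = (\<lambda>\<theta>. (v (k \<theta>) + \<theta> * k \<theta>) - K \<theta>)"
    using pstar_eq by (intro ext) simp
  have K_nonneg: "0 \<le> K \<theta>" if "\<theta> \<in> {a..b}" for \<theta>
    unfolding K_def using that k_bnd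
    by (intro Henstock_Kurzweil_Integration.integral_nonneg integrable_on_subinterval[OF ki]) auto
  have EU_ret: "exp_util v (return borel y) \<theta> = util v y \<theta>" for y \<theta>
    unfolding exp_util_def by (rule integral_return) (auto intro: util_meas)
  have U0_mono: "mono_on {a..b} (\<lambda>\<theta>. v (k \<theta>) + \<theta> * k \<theta>)"
  proof (rule mono_onI)
    fix s t assume st: "s \<in> {a..b}" "t \<in> {a..b}" "s \<le> t"
    have "XS s \<le> XS t" using XS_mono st by (auto simp: mono_on_def)
    then have "util v (XS s) s \<le> util v (XS t) t"
      using util_mono[OF A1_conc cont XS0(1)[of s] _ XS0(2)[of t] st(3)] by simp
    then show "v (k s) + s * k s \<le> v (k t) + t * k t" using U0_eq by simp
  qed
  have Kcont: "continuous_on {a..b} K" unfolding K_def by (rule indefinite_integral_continuous_1[OF ki])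
  have pstar_meas: "pstar v F f xlo xhi tlo \<in> borel_measurable (lebesgue_on {a..b})"
  proof -
    have "(\<lambda>\<theta>. (v (k \<theta>) + \<theta> * k \<theta>) - K \<theta>) \<in> borel_measurable (lebesgue_on {a..b})"
      using meas_mono[OF U0_mono] meas_cont[OF Kcont] by (rule borel_measurable_diff)
    then show ?thesis by (simp add: pstar_fun)
  qed
  have mech: "mechanism tlo thi xlo xhi (\<lambda>_. 1) (\<lambda>\<theta>. return borel (xstar v F f xlo xhi \<theta>)) (pstar v F f xlo xhi tlo)"
    unfolding mechanism_def lottery_def
  proof (intro conjI ballI)
    fix \<theta> assume "\<theta> \<in> {tlo..thi}"
    show "(1::real) \<in> {0..1}" by simp
    show "prob_space (return borel (xstar v F f xlo xhi \<theta>))" by (rule prob_space_return) simp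
    show "sets (return borel (xstar v F f xlo xhi \<theta>)) = sets borel" by simp
    show "AE x in return borel (xstar v F f xlo xhi \<theta>). x \<in> {xlo..xhi}"
      using XS(1)[of \<theta>] by (subst AE_return) (auto simp: XS_def)
  next
    show "(\<lambda>_. 1::real) \<in> borel_measurable (lebesgue_on {tlo..thi})" by simp
    show "pstar v F f xlo xhi tlo \<in> borel_measurable (lebesgue_on {tlo..thi})"
      using pstar_meas by (simp add: a_def b_def)
  qed
  have ICform: "util v (XS \<theta>') \<theta> - pstar v F f xlo xhi tlo \<theta>' \<le> util v (XS \<theta>) \<theta> - pstar v F f xlo xhi tlo \<theta>"
    if th': "\<theta> \<in> {a..b}" "\<theta>' \<in> {a..b}" for \<theta> \<theta>'
  proof -
    define x0 where "x0 = XS \<theta>'"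
    define W where "W z = util v x0 z" for z
    define g where "g z = min x0 (XE z)" for z
    have x0: "0 \<le> x0" "x0 \<le> xhi" using XS0 by (auto simp: x0_def)
    have Wg: "W t - W s \<ge> (t - s) * g s" for s t
      using util_sandwich[OF A1_conc cont x0, of t s] xa_min'[OF x0] by (simp add: W_def g_def)
    have S: "g s * (t - s) \<le> W t - W s \<and> W t - W s \<le> g t * (t - s)" for s t
      using Wg[of s t] Wg[of t s] by (simp add: algebra_simps)
    have gmono: "mono_on {a..b} g" by (rule sandwich_mono[of a b g W]) (rule S)
    have gint: "W t - W s = integral {s..t} g" if "a \<le> s" "s \<le> t" "t \<le> b" for s t
      by (rule sandwich_int[of a b g W, OF S that])
    have gi: "g integrable_on {a..b}" by (rule integrable_on_mono_on[OF gmono])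
    have Kdiff: "K t - K s = integral {s..t} k" if "a \<le> s" "s \<le> t" "t \<le> b" for s t
    proof -
      have "integral {a..s} k + integral {s..t} k = integral {a..t} k"
        using that by (intro hk_combine integrable_on_subinterval[OF ki]) auto
      then show ?thesis by (simp add: K_def)
    qed
    have gk: "g z \<le> k z" if "\<theta>' \<le> z" "z \<le> b" for z
    proof -
      have "XS \<theta>' \<le> XS z" using XS_mono th' that by (auto simp: mono_on_def)
      then show ?thesis by (auto simp: g_def k_def x0_def)
    qed
    have kg: "k z \<le> g z" if "a \<le> z" "z \<le> \<theta>'" for z
    proof -
      have "XS z \<le> XS \<theta>'" using XS_mono th' that by (auto simp: mono_on_def)
      then show ?thesis by (auto simp: g_def k_def x0_def)
    qed
    have key: "W \<theta> - W \<theta>' \<le> K \<theta> - K \<theta>'"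
    proof (cases "\<theta>' \<le> \<theta>")
      case True
      have "W \<theta> - W \<theta>' = integral {\<theta>'..\<theta>} g" using gint th' True by auto
      also have "\<dots> \<le> integral {\<theta>'..\<theta>} k"
        using gk th' by (intro integral_le integrable_on_subinterval[OF gi] integrable_on_subinterval[OF ki]) auto
      also have "\<dots> = K \<theta> - K \<theta>'" using Kdiff th' True by auto
      finally show ?thesis .
    next
      case False
      have "W \<theta>' - W \<theta> = integral {\<theta>..\<theta>'} g" using gint th' False by auto
      moreover have "integral {\<theta>..\<theta>'} k \<le> integral {\<theta>..\<theta>'} g"
        using kg th' by (intro integral_le integrable_on_subinterval[OF gi] integrable_on_subinterval[OF ki]) auto
      moreover have "K \<theta>' - K \<theta> = integral {\<theta>..\<theta>'} k" using Kdiff th' False by auto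
      ultimately show ?thesis by linarith
    qed
    have "W \<theta>' = v (k \<theta>') + \<theta>' * k \<theta>'" using U0_eq by (simp add: W_def x0_def)
    then show ?thesis using key U0_eq[of \<theta>] pstar_eq[of \<theta>] pstar_eq[of \<theta>'] by (simp add: W_def x0_def)
  qed
  have IC: "IC v tlo thi (\<lambda>_. 1) (\<lambda>\<theta>. return borel (xstar v F f xlo xhi \<theta>)) (pstar v F f xlo xhi tlo)"
    unfolding IC_def EU_ret using ICform by (simp add: XS_def a_def b_def)
  have IR: "IR v tlo thi (\<lambda>_. 1) (\<lambda>\<theta>. return borel (xstar v F f xlo xhi \<theta>)) (pstar v F f xlo xhi tlo)"
    unfolding IR_def EU_ret using K_nonneg U0_eq pstar_eq by (simp add: XS_def a_def b_def)
  have last: "\<forall>\<theta>\<in>{tlo..thi}. xa v (xstar v F f xlo xhi \<theta>) \<theta> = min (xe v xhi \<theta>) (xstar v F f xlo xhi \<theta>)"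
    using k_eq by (simp add: k_def XS_def XE_def)
  have Fcont: "continuous_on {a..b} F"
    using indefinite_integral_continuous_1[OF fi] by (rule continuous_on_eq) (simp add: Fdef)
  have oneF_abs: "(\<lambda>z. 1 - F z) absolutely_integrable_on {a..b}"
    by (rule absolutely_integrable_continuous_real) (intro continuous_intros Fcont)
  have f_abs: "f absolutely_integrable_on {a..b}"
    using fi fpos by (intro nonnegative_absolutely_integrable_1) (auto intro: less_imp_le)
  have oneF_bnd: "\<bar>1 - F z\<bar> \<le> 1" if "z \<in> {a..b}" for z
  proof -
    have "0 \<le> F z" unfolding Fdef[OF that] using that fpos
      by (intro Henstock_Kurzweil_Integration.integral_nonneg integrable_on_subinterval[OF fi])
        (auto intro: less_imp_le)
    then show ?thesis using F_le1[OF that] by simp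
  qed
  obtain Bv where Bv: "\<forall>y\<in>{0..xhi}. \<bar>v y\<bar> \<le> Bv"
  proof -
    have "bounded (v ` {0..xhi})"
      by (rule compact_imp_bounded, rule compact_continuous_image[OF cont compact_Icc])
    then obtain B where "\<forall>x\<in>v ` {0..xhi}. norm x \<le> B" unfolding bounded_iff by blast
    then show ?thesis using that by auto
  qed
  define T where "T = \<bar>a\<bar> + \<bar>b\<bar>"
  define Bu where "Bu = Bv + T * xhi"
  have ubnd: "\<bar>util v y \<theta>\<bar> \<le> Bu" if y: "y \<in> {xlo..xhi}" and th: "\<theta> \<in> {a..b}" for y \<theta>
  proof -
    define mm where "mm = min y (XE \<theta>)"
    have mm: "0 \<le> mm" "mm \<le> xhi" using y XE(1)[of \<theta>] allocs by (auto simp: mm_def)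
    have "\<bar>v mm\<bar> \<le> Bv" using Bv mm by auto
    moreover have "\<bar>\<theta> * mm\<bar> \<le> T * xhi"
    proof -
      have "\<bar>\<theta>\<bar> \<le> T" using th by (auto simp: T_def)
      then show ?thesis unfolding abs_mult using mm by (intro mult_mono) auto
    qed
    moreover have "util v y \<theta> = v mm + \<theta> * mm" unfolding mm_def using y allocs by (intro util_eq') auto
    ultimately show ?thesis by (simp add: Bu_def)
  qed
  have U0bnd: "\<bar>v (k \<theta>) + \<theta> * k \<theta>\<bar> \<le> Bu" if "\<theta> \<in> {a..b}" for \<theta>
    using ubnd[OF XS(1)[of \<theta>] that] U0_eq[of \<theta>] by simp
  have intbnd: "\<bar>integral {a..\<theta>} h\<bar> \<le> xhi * (b - a)"
    if "\<theta> \<in> {a..b}" "h integrable_on {a..b}" "\<And>z. z \<in> {a..b} \<Longrightarrow> \<bar>h z\<bar> \<le> xhi" for \<theta> h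
  proof -
    have "\<bar>integral {a..\<theta>} h\<bar> \<le> xhi * (\<theta> - a)"
      using that by (intro int_abs_bound integrable_on_subinterval[OF that(2)]) auto
    also have "\<dots> \<le> xhi * (b - a)" using that xhi0 by (intro mult_left_mono) auto
    finally show ?thesis .
  qed
  have Kbnd: "\<bar>K \<theta>\<bar> \<le> xhi * (b - a)" if "\<theta> \<in> {a..b}" for \<theta>
    unfolding K_def using that ki k_bnd by (intro intbnd) auto
  have kbnd': "\<bar>k z\<bar> \<le> xhi" for z using k_bnd[of z] by simp
  have iU0: "(\<lambda>\<theta>. (v (k \<theta>) + \<theta> * k \<theta>) * f \<theta>) integrable_on {a..b}"
    by (rule prod_int[OF meas_mono[OF U0_mono] U0bnd f_abs])
  have iK: "(\<lambda>\<theta>. K \<theta> * f \<theta>) integrable_on {a..b}"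
    by (rule prod_int[OF meas_cont[OF Kcont] Kbnd f_abs])
  have ik: "(\<lambda>z. k z * (1 - F z)) integrable_on {a..b}"
    by (rule prod_int[OF meas_mono[OF k_mono] kbnd' oneF_abs])
  have I2: "integral {a..b} (\<lambda>\<theta>. K \<theta> * f \<theta>) = integral {a..b} (\<lambda>z. k z * (1 - F z))"
    using parts_identity[OF ab ki kbnd' fi fbnd Fdef] iK ik Fb by (simp add: K_def)
  have rev_star: "revenue f tlo thi (pstar v F f xlo xhi tlo)
      = integral {a..b} (\<lambda>\<theta>. (v (k \<theta>) + \<theta> * k \<theta>) * f \<theta>) - integral {a..b} (\<lambda>z. k z * (1 - F z))"
  proof -
    have "revenue f tlo thi (pstar v F f xlo xhi tlo)
        = integral {a..b} (\<lambda>\<theta>. (v (k \<theta>) + \<theta> * k \<theta>) * f \<theta> - K \<theta> * f \<theta>)"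
      unfolding revenue_def pstar_fun a_def b_def by (simp add: left_diff_distrib)
    also have "\<dots> = integral {a..b} (\<lambda>\<theta>. (v (k \<theta>) + \<theta> * k \<theta>) * f \<theta>) - integral {a..b} (\<lambda>\<theta>. K \<theta> * f \<theta>)"
      by (rule hk_diff[OF iU0 iK])
    finally show ?thesis using I2 by simp
  qed
  have rev: "\<forall>q X p. mechanism tlo thi xlo xhi q X p \<and> IC v tlo thi q X p \<and> IR v tlo thi q X p
          \<longrightarrow> revenue f tlo thi p \<le> revenue f tlo thi (pstar v F f xlo xhi tlo)"
  proof (intro allI impI, elim conjE)
    fix q X p assume mech: "mechanism tlo thi xlo xhi q X p" and ic: "IC v tlo thi q X p"
      and ir: "IR v tlo thi q X p"
    have qb: "q \<theta> \<in> {0..1}" and L: "lottery xlo xhi (X \<theta>)" if "\<theta> \<in> {a..b}" for \<theta>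
      using mech that unfolding mechanism_def by (auto simp: a_def b_def)
    have pm: "p \<in> borel_measurable (lebesgue_on {a..b})"
      using mech unfolding mechanism_def by (auto simp: a_def b_def)
    have icf: "q t * exp_util v (X t) s - p t \<le> q s * exp_util v (X s) s - p s"
      if "s \<in> {a..b}" "t \<in> {a..b}" for s t
      using ic that unfolding IC_def by (auto simp: a_def b_def)
    have irf: "0 \<le> q s * exp_util v (X s) s - p s" if "s \<in> {a..b}" for s
      using ir that unfolding IR_def by (auto simp: a_def b_def)
    define EU where "EU s t = exp_util v (X t) s" for s t
    define E where "E t = (\<integral>y. min y (XE t) \<partial>X t)" for t
    define gm where "gm t = q t * E t" for t
    define U where "U s = q s * EU s s - p s" for s
    have minm: "(\<lambda>y. min y c) \<in> borel_measurable borel" for c :: real by measurable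
    have int_u: "integrable (X t) (\<lambda>y. util v y s)" if "t \<in> {a..b}" "s \<in> {a..b}" for s t
      using lot_int[OF L[OF that(1)] util_meas, where B=Bu] ubnd that(2) by auto
    have int_min: "integrable (X t) (\<lambda>y. min y (XE s))" if "t \<in> {a..b}" for s t
    proof (rule lot_int[OF L[OF that(1)] minm[of "XE s"], where B=xhi])
      show "\<forall>y\<in>{xlo..xhi}. \<bar>min y (XE s)\<bar> \<le> xhi" using XE(1)[of s] allocs by auto
    qed
    have EUbnd: "\<bar>EU s s\<bar> \<le> Bu" if "s \<in> {a..b}" for s
    proof -
      have ub: "util v y s \<le> Bu" "- Bu \<le> util v y s" if "y \<in> {xlo..xhi}" for y
        using abs_le_D1[OF ubnd[OF that \<open>s \<in> {a..b}\<close>]] abs_le_D2[OF ubnd[OF that \<open>s \<in> {a..b}\<close>]]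
        by linarith+
      have "EU s s \<le> Bu" unfolding EU_def exp_util_def
        using lot_le[OF L[OF that] int_u[OF that that], where c=Bu] ub by blast
      moreover have "- Bu \<le> EU s s" unfolding EU_def exp_util_def
        using lot_ge[OF L[OF that] int_u[OF that that], where c="- Bu"] ub by blast
      ultimately show ?thesis by simp
    qed
    have Ebnd: "0 \<le> E t" "E t \<le> xhi" if "t \<in> {a..b}" for t
    proof -
      have "\<forall>y\<in>{xlo..xhi}. 0 \<le> min y (XE t)" using XE(1)[of t] allocs by auto
      then show "0 \<le> E t" unfolding E_def
        by (rule lot_ge[OF L[OF that] int_min[OF that, where s=t]])
      have "\<forall>y\<in>{xlo..xhi}. min y (XE t) \<le> xhi" by auto
      then show "E t \<le> xhi" unfolding E_def
        by (rule lot_le[OF L[OF that] int_min[OF that, where s=t]])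
    qed
    have gmbnd: "0 \<le> gm t" "gm t \<le> xhi" if "t \<in> {a..b}" for t
    proof -
      show "0 \<le> gm t" using qb[OF that] Ebnd[OF that] by (simp add: gm_def)
      have "gm t \<le> E t" using qb[OF that] Ebnd[OF that] unfolding gm_def
        by (intro mult_left_le_one_le) auto
      then show "gm t \<le> xhi" using Ebnd[OF that] by simp
    qed
    have step: "(s - t) * gm t \<le> U s - U t" if st: "s \<in> {a..b}" "t \<in> {a..b}" for s t
    proof -
      have "0 \<le> (\<integral>y. util v y s - util v y t - (s - t) * min y (XE t) \<partial>X t)"
      proof (rule lot_ge[OF L[OF st(2)]])
        show "integrable (X t) (\<lambda>y. util v y s - util v y t - (s - t) * min y (XE t))"
          using int_u[OF st(2) st(1)] int_u[OF st(2) st(2)] int_min[OF st(2), where s=t]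
          by (intro Bochner_Integration.integrable_diff Bochner_Integration.integrable_mult_right) auto
        show "\<forall>y\<in>{xlo..xhi}. 0 \<le> util v y s - util v y t - (s - t) * min y (XE t)"
        proof
          fix y assume y: "y \<in> {xlo..xhi}"
          then have y0: "0 \<le> y" "y \<le> xhi" using allocs by auto
          show "0 \<le> util v y s - util v y t - (s - t) * min y (XE t)"
            using util_sandwich[OF A1_conc cont y0, of s t] xa_min'[OF y0, of t] by simp
        qed
      qed
      also have "(\<integral>y. util v y s - util v y t - (s - t) * min y (XE t) \<partial>X t)
          = EU s t - EU t t - (s - t) * E t"
        unfolding EU_def exp_util_def E_def
        using int_u[OF st(2) st(1)] int_u[OF st(2) st(2)] int_min[OF st(2), where s=t]
        by (simp add: Bochner_Integration.integral_diff Bochner_Integration.integrable_diff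
            Bochner_Integration.integrable_mult_right integral_mult_right_zero)
      finally have "(s - t) * E t \<le> EU s t - EU t t" by simp
      then have "q t * ((s - t) * E t) \<le> q t * (EU s t - EU t t)"
        using qb[OF st(2)] by (intro mult_left_mono) auto
      moreover have "q t * EU s t - p t \<le> U s" using icf[OF st] by (simp add: U_def EU_def)
      ultimately show ?thesis by (simp add: U_def gm_def algebra_simps)
    qed
    have S: "gm s * (t - s) \<le> U t - U s \<and> U t - U s \<le> gm t * (t - s)"
      if "a \<le> s" "s \<le> t" "t \<le> b" for s t
      using step[of t s] step[of s t] that by (auto simp: algebra_simps)
    have gm_mono: "mono_on {a..b} gm" by (rule sandwich_mono[of a b gm U]) (rule S)
    have gmi: "gm integrable_on {a..b}" by (rule integrable_on_mono_on[OF gm_mono])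
    define Gm where "Gm \<theta> = integral {a..\<theta>} gm" for \<theta>
    have Ueq: "U t = U a + Gm t" if "t \<in> {a..b}" for t
      using sandwich_int[of a b gm U, OF S, of a t] that ab by (auto simp: Gm_def)
    have Gmcont: "continuous_on {a..b} Gm" unfolding Gm_def by (rule indefinite_integral_continuous_1[OF gmi])
    have gmbnd': "\<bar>gm z\<bar> \<le> xhi" if "z \<in> {a..b}" for z using gmbnd[OF that] by simp
    have Gmbnd: "\<bar>Gm \<theta>\<bar> \<le> xhi * (b - a)" if "\<theta> \<in> {a..b}" for \<theta>
      unfolding Gm_def using that gmi gmbnd' by (intro intbnd) auto
    have QE_eq: "q \<theta> * EU \<theta> \<theta> = p \<theta> + U a + Gm \<theta>" if "\<theta> \<in> {a..b}" for \<theta>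
      using Ueq[OF that] by (simp add: U_def)
    have QEm: "(\<lambda>\<theta>. q \<theta> * EU \<theta> \<theta>) \<in> borel_measurable (lebesgue_on {a..b})"
    proof -
      have "(\<lambda>\<theta>. p \<theta> + U a + Gm \<theta>) \<in> borel_measurable (lebesgue_on {a..b})"
        using pm meas_cont[OF Gmcont] by measurable
      then show ?thesis by (rule measurable_cong[THEN iffD1, rotated]) (simp add: QE_eq)
    qed
    have QEbnd: "\<bar>q \<theta> * EU \<theta> \<theta>\<bar> \<le> Bu" if "\<theta> \<in> {a..b}" for \<theta>
    proof -
      have "\<bar>q \<theta> * EU \<theta> \<theta>\<bar> \<le> 1 * Bu" unfolding abs_mult
        using qb[OF that] EUbnd[OF that] by (intro mult_mono) auto
      then show ?thesis by simp
    qed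
    have iQE: "(\<lambda>\<theta>. q \<theta> * EU \<theta> \<theta> * f \<theta>) integrable_on {a..b}"
      by (rule prod_int[OF QEm QEbnd f_abs])
    have iGm: "(\<lambda>\<theta>. Gm \<theta> * f \<theta>) integrable_on {a..b}"
      by (rule prod_int[OF meas_cont[OF Gmcont] Gmbnd f_abs])
    have igm: "(\<lambda>z. gm z * (1 - F z)) integrable_on {a..b}"
      by (rule prod_int[OF meas_mono[OF gm_mono] gmbnd' oneF_abs])
    have I1: "integral {a..b} (\<lambda>\<theta>. Gm \<theta> * f \<theta>) = integral {a..b} (\<lambda>z. gm z * (1 - F z))"
      using parts_identity[OF ab gmi gmbnd' fi fbnd Fdef] iGm igm Fb by (simp add: Gm_def)
    have pw: "q \<theta> * EU \<theta> \<theta> * f \<theta> - gm \<theta> * (1 - F \<theta>) \<le> (v (k \<theta>) + \<theta> * k \<theta>) * f \<theta> - k \<theta> * (1 - F \<theta>)"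
      if th: "\<theta> \<in> {a..b}" for \<theta>
    proof -
      define h where "h = (1 - F \<theta>) / f \<theta>"
      have hf: "h * f \<theta> = 1 - F \<theta>" using fpos[OF th] by (simp add: h_def)
      have vth: "vt \<theta> = \<theta> - h" by (simp add: vt_eq h_def)
      have "EU \<theta> \<theta> - h * E \<theta> = (\<integral>y. util v y \<theta> - h * min y (XE \<theta>) \<partial>X \<theta>)"
        unfolding EU_def exp_util_def E_def
        using int_u[OF th th] int_min[OF th, where s=\<theta>]
        by (simp add: Bochner_Integration.integral_diff Bochner_Integration.integrable_mult_right
            integral_mult_right_zero)
      also have "\<dots> \<le> v (k \<theta>) + vt \<theta> * k \<theta>"
      proof (rule lot_le[OF L[OF th]])
        show "integrable (X \<theta>) (\<lambda>y. util v y \<theta> - h * min y (XE \<theta>))"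
          using int_u[OF th th] int_min[OF th, where s=\<theta>]
          by (intro Bochner_Integration.integrable_diff Bochner_Integration.integrable_mult_right) auto
        show "\<forall>y\<in>{xlo..xhi}. util v y \<theta> - h * min y (XE \<theta>) \<le> v (k \<theta>) + vt \<theta> * k \<theta>"
        proof
          fix y assume y: "y \<in> {xlo..xhi}"
          then have y0: "0 \<le> y" "y \<le> xhi" using allocs by auto
          have "util v y \<theta> - h * min y (XE \<theta>) = v (min y (XE \<theta>)) + vt \<theta> * min y (XE \<theta>)"
            using util_eq'[OF y0, of \<theta>] unfolding vth by (simp add: algebra_simps)
          then show "util v y \<theta> - h * min y (XE \<theta>) \<le> v (k \<theta>) + vt \<theta> * k \<theta>"
            using phi_le[OF th y] by simp
        qed
      qed
      finally have A: "EU \<theta> \<theta> - h * E \<theta> \<le> v (k \<theta>) + vt \<theta> * k \<theta>" .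
      have "q \<theta> * EU \<theta> \<theta> - h * gm \<theta> = q \<theta> * (EU \<theta> \<theta> - h * E \<theta>)" by (simp add: gm_def algebra_simps)
      also have "\<dots> \<le> q \<theta> * (v (k \<theta>) + vt \<theta> * k \<theta>)" using A qb[OF th] by (intro mult_left_mono) auto
      also have "\<dots> \<le> v (k \<theta>) + vt \<theta> * k \<theta>" using qb[OF th] phik_nonneg[OF th]
        by (intro mult_left_le_one_le) auto
      finally have B: "q \<theta> * EU \<theta> \<theta> - h * gm \<theta> \<le> v (k \<theta>) + vt \<theta> * k \<theta>" .
      then have C: "(q \<theta> * EU \<theta> \<theta> - h * gm \<theta>) * f \<theta> \<le> (v (k \<theta>) + vt \<theta> * k \<theta>) * f \<theta>"
        using fpos[OF th] by (intro mult_right_mono) auto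
      have e1: "(q \<theta> * EU \<theta> \<theta> - h * gm \<theta>) * f \<theta> = q \<theta> * EU \<theta> \<theta> * f \<theta> - gm \<theta> * (h * f \<theta>)"
        by (simp add: algebra_simps)
      have e2: "(v (k \<theta>) + vt \<theta> * k \<theta>) * f \<theta> = (v (k \<theta>) + \<theta> * k \<theta>) * f \<theta> - k \<theta> * (h * f \<theta>)"
        by (simp add: vth algebra_simps)
      show ?thesis using C unfolding e1 e2 hf .
    qed
    have Ua: "0 \<le> U a" using irf[of a] ab by (simp add: U_def EU_def)
    have "revenue f tlo thi p = integral {a..b} (\<lambda>\<theta>. q \<theta> * EU \<theta> \<theta> * f \<theta> - U a * f \<theta> - Gm \<theta> * f \<theta>)"
      unfolding revenue_def a_def[symmetric] b_def[symmetric]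
      by (rule Henstock_Kurzweil_Integration.integral_cong) (simp add: QE_eq algebra_simps)
    also have "\<dots> = integral {a..b} (\<lambda>\<theta>. q \<theta> * EU \<theta> \<theta> * f \<theta>) - U a * integral {a..b} f
        - integral {a..b} (\<lambda>\<theta>. Gm \<theta> * f \<theta>)"
    proof -
      have i2: "(\<lambda>\<theta>. U a * f \<theta>) integrable_on {a..b}" using fi by (rule integrable_on_mult_right)
      have "integral {a..b} (\<lambda>\<theta>. q \<theta> * EU \<theta> \<theta> * f \<theta> - U a * f \<theta> - Gm \<theta> * f \<theta>)
          = integral {a..b} (\<lambda>\<theta>. q \<theta> * EU \<theta> \<theta> * f \<theta> - U a * f \<theta>) - integral {a..b} (\<lambda>\<theta>. Gm \<theta> * f \<theta>)"
        using iQE i2 iGm by (intro hk_diff integrable_diff)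
      also have "integral {a..b} (\<lambda>\<theta>. q \<theta> * EU \<theta> \<theta> * f \<theta> - U a * f \<theta>)
          = integral {a..b} (\<lambda>\<theta>. q \<theta> * EU \<theta> \<theta> * f \<theta>) - U a * integral {a..b} f"
        using iQE i2 by (simp add: hk_diff hk_mr)
      finally show ?thesis .
    qed
    also have "\<dots> = integral {a..b} (\<lambda>\<theta>. q \<theta> * EU \<theta> \<theta> * f \<theta> - gm \<theta> * (1 - F \<theta>)) - U a"
      using I1 Fint iQE igm by (simp add: hk_diff)
    also have "\<dots> \<le> integral {a..b} (\<lambda>\<theta>. (v (k \<theta>) + \<theta> * k \<theta>) * f \<theta> - k \<theta> * (1 - F \<theta>))"
    proof -
      have "integral {a..b} (\<lambda>\<theta>. q \<theta> * EU \<theta> \<theta> * f \<theta> - gm \<theta> * (1 - F \<theta>))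
          \<le> integral {a..b} (\<lambda>\<theta>. (v (k \<theta>) + \<theta> * k \<theta>) * f \<theta> - k \<theta> * (1 - F \<theta>))"
        using pw iQE igm iU0 ik by (intro integral_le integrable_diff) auto
      then show ?thesis using Ua by linarith
    qed
    also have "\<dots> = revenue f tlo thi (pstar v F f xlo xhi tlo)"
      using rev_star iU0 ik by (simp add: hk_diff)
    finally show "revenue f tlo thi p \<le> revenue f tlo thi (pstar v F f xlo xhi tlo)" .
  qed
  show ?thesis using mech IC IR rev last by blast
qed


end
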